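(* Let $X:\mathbb{N}\to\mathbf{Set}_*$ be a tower of pointed sets, $A$ an abelian group, $m\ge2$ an integer, $h\in G(X,A)$, and $x_1,\dots,x_l\in\lim_\mathbb{N}X$. Suppose that for every $n\in\mathbb{N}$ and every $a\in\mathrm{supp}(h(n))\setminus\{x_1(n),\dots,x_l(n)\}$ we have $h(n)_a\in mA$. Then $[h]\in mH(X,A)$.
   Context: $\mathbb{N}$ is regarded as a category with a single morphism $n\to m$ whenever $n\ge m$. For a pointed set $Y$, $Y\wedge A:=\bigoplus_{Y\setminus\{*\}}A$, whose elements are finitely supported pointed maps $y:Y\to A$, $s\mapsto y_s$, with $\mathrm{supp}(y)=\{s:y_s\ne0\}$; functorial via $f_*(sv)=f(s)v$, where $sv$ is the element with value $v$ at $s$ ($*v=0$). $G(X,A):=\lim_\mathbb{N}(X\wedge A)$; $K(X,A)$ is the image of the injective natural map $\rho:(\lim_\mathbb{N}X)\wedge A\to G(X,A)$, $\rho(xv)(n)=x(n)v$; $H(X,A):=G(X,A)/K(X,A)$, and $[h]$ denotes the class of $h\in G(X,A)$ in $H(X,A)$. *)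

theory Defs
  imports Main
begin

text \<open>A tower of pointed sets X : N -> Set_*: pointed sets (X n, pt n) and pointed
  maps f n : X (Suc n) -> X n (the morphism n+1 -> n of N; all other morphisms are composites).\<close>
definition tower :: "(nat \<Rightarrow> 'a set) \<Rightarrow> (nat \<Rightarrow> 'a) \<Rightarrow> (nat \<Rightarrow> 'a \<Rightarrow> 'a) \<Rightarrow> bool" where
  "tower X pt f \<longleftrightarrow> (\<forall>n. pt n \<in> X n \<and> (\<forall>x \<in> X (Suc n). f n x \<in> X n) \<and> f n (pt (Suc n)) = pt n)"

definition limT :: "(nat \<Rightarrow> 'a set) \<Rightarrow> (nat \<Rightarrow> 'a \<Rightarrow> 'a) \<Rightarrow> (nat \<Rightarrow> 'a) set" where
  "limT X f = {x. \<forall>n. x n \<in> X n \<and> f n (x (Suc n)) = x n}"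

definition supp :: "('c \<Rightarrow> 'b::zero) \<Rightarrow> 'c set" where
  "supp y = {s. y s \<noteq> 0}"

text \<open>Y \<and> A: finitely supported pointed maps Y -> A (value 0 at the base point p and
  outside Y).\<close>
definition smash :: "'c set \<Rightarrow> 'c \<Rightarrow> ('c \<Rightarrow> 'b::zero) set" where
  "smash Y p = {y. (\<forall>s. s \<notin> Y - {p} \<longrightarrow> y s = 0) \<and> finite (supp y)}"

text \<open>Functoriality f_* : Y \<and> A -> Z \<and> A, f_*(s v) = f(s) v, extended additively.\<close>
definition push :: "('c \<Rightarrow> 'd) \<Rightarrow> 'd set \<Rightarrow> 'd \<Rightarrow> ('c \<Rightarrow> 'b::comm_monoid_add) \<Rightarrow> ('d \<Rightarrow> 'b)" where
  "push g Z q y = (\<lambda>t. if t \<in> Z - {q} then (\<Sum>s\<in>{s \<in> supp y. g s = t}. y s) else 0)"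

definition GXA :: "(nat \<Rightarrow> 'a set) \<Rightarrow> (nat \<Rightarrow> 'a) \<Rightarrow> (nat \<Rightarrow> 'a \<Rightarrow> 'a) \<Rightarrow> (nat \<Rightarrow> 'a \<Rightarrow> 'b::ab_group_add) set" where
  "GXA X pt f = {h. \<forall>n. h n \<in> smash (X n) (pt n) \<and> push (f n) (X n) (pt n) (h (Suc n)) = h n}"

text \<open>rho : (lim X) \<and> A -> G(X,A), rho(x v)(n) = x(n) v, extended additively.\<close>
definition rho :: "(nat \<Rightarrow> 'a set) \<Rightarrow> (nat \<Rightarrow> 'a) \<Rightarrow> ((nat \<Rightarrow> 'a) \<Rightarrow> 'b::ab_group_add) \<Rightarrow> (nat \<Rightarrow> 'a \<Rightarrow> 'b)" where
  "rho X pt y = (\<lambda>n a. if a \<in> X n - {pt n} then (\<Sum>x\<in>{x \<in> supp y. x n = a}. y x) else 0)"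

definition KXA :: "(nat \<Rightarrow> 'a set) \<Rightarrow> (nat \<Rightarrow> 'a) \<Rightarrow> (nat \<Rightarrow> 'a \<Rightarrow> 'a) \<Rightarrow> (nat \<Rightarrow> 'a \<Rightarrow> 'b::ab_group_add) set" where
  "KXA X pt f = rho X pt ` smash (limT X f) pt"

definition nsm :: "nat \<Rightarrow> 'b::comm_monoid_add \<Rightarrow> 'b" where
  "nsm m v = (\<Sum>i<m. v)"

text \<open>[h] \<in> m H(X,A) with H = G/K: some g \<in> G with h - m g \<in> K.\<close>
definition in_mH :: "(nat \<Rightarrow> 'a set) \<Rightarrow> (nat \<Rightarrow> 'a) \<Rightarrow> (nat \<Rightarrow> 'a \<Rightarrow> 'a) \<Rightarrow> nat \<Rightarrow> (nat \<Rightarrow> 'a \<Rightarrow> 'b::ab_group_add) \<Rightarrow> bool" where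
  "in_mH X pt f m h \<longleftrightarrow> (\<exists>g \<in> GXA X pt f. (\<lambda>n a. h n a - nsm m (g n a)) \<in> KXA X pt f)"

end

theory Submission
  imports Defs
begin

lemma push_eq:
  assumes "finite S" "supp y \<subseteq> S"
  shows "push g Z q y t = (if t \<in> Z - {q} then (\<Sum>s\<in>{s\<in>S. g s = t}. y s) else 0)"
  unfolding push_def
  by (rule if_cong[OF refl _ refl], rule sum.mono_neutral_left) (use assms in \<open>auto simp: supp_def\<close>)

lemma rho_eq:
  assumes "finite S" "supp y \<subseteq> S"
  shows "rho X pt y n a = (if a \<in> X n - {pt n} then (\<Sum>x\<in>{x\<in>S. x n = a}. y x) else 0)"
  unfolding rho_def
  by (rule if_cong[OF refl _ refl], rule sum.mono_neutral_left) (use assms in \<open>auto simp: supp_def\<close>)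

lemma supp_push: "supp (push g Z q y) \<subseteq> {t \<in> Z - {q}. \<exists>s\<in>supp y. g s = t}"
proof
  fix t assume "t \<in> supp (push g Z q y)"
  then have "t \<in> Z - {q}" and ne: "(\<Sum>s\<in>{s \<in> supp y. g s = t}. y s) \<noteq> 0"
    by (auto simp: supp_def push_def split: if_splits)
  from ne have "{s \<in> supp y. g s = t} \<noteq> {}" by (metis sum.empty)
  with \<open>t \<in> Z - {q}\<close> show "t \<in> {t \<in> Z - {q}. \<exists>s\<in>supp y. g s = t}" by auto
qed

lemma finite_supp_push: "finite (supp y) \<Longrightarrow> finite (supp (push g Z q y))"
  by (rule finite_subset[OF supp_push]) (auto intro: finite_subset[of _ "g ` supp y"])

lemma nsm_add: "nsm m (a + b) = nsm m a + nsm m (b::'b::comm_monoid_add)"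
  by (simp add: nsm_def sum.distrib)
lemma nsm_diff: "nsm m (a - b) = nsm m a - nsm m (b::'b::ab_group_add)"
  by (simp add: nsm_def sum_subtractf)
lemma nsm_0[simp]: "nsm m (0::'b::comm_monoid_add) = 0"
  by (simp add: nsm_def)
lemma nsm_sum: "nsm m (\<Sum>x\<in>A. g x) = (\<Sum>x\<in>A. nsm m (g x::'b::comm_monoid_add))"
  by (simp add: nsm_def sum.swap[of _ A])

definition dv :: "nat \<Rightarrow> 'b::comm_monoid_add \<Rightarrow> bool" where "dv m x \<longleftrightarrow> (\<exists>v. x = nsm m v)"

lemma dv_0[simp]: "dv m 0" unfolding dv_def by (rule exI[of _ 0]) simp
lemma dv_add: "dv m a \<Longrightarrow> dv m b \<Longrightarrow> dv m (a+b)" unfolding dv_def by (metis nsm_add)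
lemma dv_diff: "dv m a \<Longrightarrow> dv m b \<Longrightarrow> dv m (a-(b::'b::ab_group_add))" unfolding dv_def by (metis nsm_diff)
lemma dv_sum: "(\<And>x. x\<in>A \<Longrightarrow> dv m (g x)) \<Longrightarrow> dv m (\<Sum>x\<in>A. g x)"
  by (induction A rule: infinite_finite_induct) (auto intro: dv_add)

lemma push_nsm:
  assumes "finite (supp y)"
  shows "push g Z q (\<lambda>s. nsm m (y s)) t = nsm m (push g Z q y t)"
proof -
  have "supp (\<lambda>s. nsm m (y s)) \<subseteq> supp y" by (auto simp: supp_def)
  then show ?thesis using assms
    by (simp add: push_eq[of "supp y"] nsm_sum)
qed

lemma push_diff:
  fixes y z :: "'c \<Rightarrow> 'b::ab_group_add"
  assumes "finite (supp y)" "finite (supp z)"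
  shows "push g Z q (\<lambda>s. y s - z s) t = push g Z q y t - push g Z q z t"
proof -
  have "supp (\<lambda>s. y s - z s) \<subseteq> supp y \<union> supp z" by (auto simp: supp_def)
  then show ?thesis using assms
    by (simp add: push_eq[of "supp y \<union> supp z"] sum_subtractf)
qed

lemma push_add:
  fixes y z :: "'c \<Rightarrow> 'b::ab_group_add"
  assumes "finite (supp y)" "finite (supp z)"
  shows "push g Z q (\<lambda>s. y s + z s) t = push g Z q y t + push g Z q z t"
proof -
  have "supp (\<lambda>s. y s + z s) \<subseteq> supp y \<union> supp z" by (auto simp: supp_def)
  then show ?thesis using assms
    by (simp add: push_eq[of "supp y \<union> supp z"] sum.distrib)
qed

lemma sep_mono:
  assumes "x \<in> limT X f" "z \<in> limT X f" "x n \<noteq> z n" "n \<le> k"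
  shows "x k \<noteq> z k"
  using assms(4)
proof (induction k rule: dec_induct)
  case base then show ?case using assms(3) .
next
  case (step k)
  have "f k (x (Suc k)) = x k" "f k (z (Suc k)) = z k" using assms(1,2) by (auto simp: limT_def)
  then show ?case using step.IH by metis
qed

lemma pt_limT: "tower X pt f \<Longrightarrow> pt \<in> limT X f"
  by (auto simp: tower_def limT_def)

lemma rho_smash:
  fixes y :: "(nat \<Rightarrow> 'a) \<Rightarrow> 'b::ab_group_add"
  assumes "finite (supp y)"
  shows "rho X pt y n \<in> smash (X n) (pt n)"
proof -
  have "supp (rho X pt y n) \<subseteq> (\<lambda>x. x n) ` supp y"
  proof
    fix a assume "a \<in> supp (rho X pt y n)"
    then have "(\<Sum>x\<in>{x \<in> supp y. x n = a}. y x) \<noteq> 0"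
      by (auto simp: supp_def rho_def split: if_splits)
    then have "{x \<in> supp y. x n = a} \<noteq> {}" by (metis sum.empty)
    then show "a \<in> (\<lambda>x. x n) ` supp y" by auto
  qed
  then show ?thesis using assms
    by (auto simp: smash_def rho_def intro: finite_subset)
qed

lemma rho_supp_sub:
  fixes y :: "(nat \<Rightarrow> 'a) \<Rightarrow> 'b::ab_group_add"
  shows "supp (rho X pt y n) \<subseteq> (\<lambda>x. x n) ` supp y"
proof
  fix a assume "a \<in> supp (rho X pt y n)"
  then have "(\<Sum>x\<in>{x \<in> supp y. x n = a}. y x) \<noteq> 0"
    by (auto simp: supp_def rho_def split: if_splits)
  then have "{x \<in> supp y. x n = a} \<noteq> {}" by (metis sum.empty)
  then show "a \<in> (\<lambda>x. x n) ` supp y" by auto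
qed

lemma rho_push:
  fixes y :: "(nat \<Rightarrow> 'a) \<Rightarrow> 'b::ab_group_add"
  assumes tw: "tower X pt f" and fy: "finite (supp y)" and sy: "supp y \<subseteq> limT X f"
  shows "push (f n) (X n) (pt n) (rho X pt y (Suc n)) = rho X pt y n"
proof
  fix t
  let ?S = "(\<lambda>x. x (Suc n)) ` supp y"
  have fS: "finite ?S" using fy by simp
  have pe: "push (f n) (X n) (pt n) (rho X pt y (Suc n)) t =
     (if t \<in> X n - {pt n} then (\<Sum>s\<in>{s\<in>?S. f n s = t}. rho X pt y (Suc n) s) else 0)"
    by (rule push_eq[OF fS rho_supp_sub])
  show "push (f n) (X n) (pt n) (rho X pt y (Suc n)) t = rho X pt y n t"
  proof (cases "t \<in> X n - {pt n}")
    case False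
    have "rho X pt y n t = 0" using False unfolding rho_def by auto
    then show ?thesis unfolding pe if_not_P[OF False] by simp
  next
    case True
    have inner: "rho X pt y (Suc n) s = (\<Sum>x\<in>{x\<in>supp y. x (Suc n) = s}. y x)"
      if "s \<in> {s\<in>?S. f n s = t}" for s
    proof -
      from that obtain x where x: "x \<in> supp y" "s = x (Suc n)" "f n s = t" by auto
      have "s \<in> X (Suc n)" using x sy by (auto simp: limT_def)
      moreover have "s \<noteq> pt (Suc n)" using x True tw by (auto simp: tower_def)
      ultimately show ?thesis by (simp add: rho_def)
    qed
    have "(\<Sum>s\<in>{s\<in>?S. f n s = t}. rho X pt y (Suc n) s)
        = (\<Sum>s\<in>{s\<in>?S. f n s = t}. (\<Sum>x\<in>{x. x \<in> {x\<in>supp y. x n = t} \<and> x (Suc n) = s}. y x))"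
    proof (rule sum.cong[OF refl])
      fix s assume s: "s \<in> {s\<in>?S. f n s = t}"
      have "{x\<in>supp y. x (Suc n) = s} = {x. x \<in> {x\<in>supp y. x n = t} \<and> x (Suc n) = s}"
      proof -
        have lim: "\<And>x. x \<in> supp y \<Longrightarrow> f n (x (Suc n)) = x n" using sy by (auto simp: limT_def)
        show ?thesis using s lim by (auto, metis)
      qed
      then show "rho X pt y (Suc n) s = (\<Sum>x\<in>{x. x \<in> {x\<in>supp y. x n = t} \<and> x (Suc n) = s}. y x)"
        using inner[OF s] by simp
    qed
    also have "\<dots> = (\<Sum>x\<in>{x\<in>supp y. x n = t}. y x)"
      by (rule sum.group) (use fy fS sy in \<open>auto simp: limT_def\<close>)
    also have "\<dots> = rho X pt y n t" using True by (simp add: rho_def)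
    finally show ?thesis using pe True by simp
  qed
qed

lemma supp_diff_sub: "supp (\<lambda>a. u a - v a) \<subseteq> supp u \<union> supp (v::'c \<Rightarrow> 'b::ab_group_add)"
  by (auto simp: supp_def)

lemma lift_div:
  fixes k :: "nat \<Rightarrow> 'a \<Rightarrow> 'b::ab_group_add"
  assumes tw: "tower X pt f" and kG: "k \<in> GXA X pt f" and dvk: "\<forall>n a. dv m (k n a)"
  shows "\<exists>g\<in>GXA X pt f. \<forall>n a. nsm m (g n a) = k n a"
proof -
  have ksm: "k n \<in> smash (X n) (pt n)" and kp: "push (f n) (X n) (pt n) (k (Suc n)) = k n" for n
    using kG by (auto simp: GXA_def)
  have fk: "finite (supp (k n))" for n using ksm by (simp add: smash_def)
  define q where "q n a = (if k n a = 0 then 0 else SOME v. k n a = nsm m v)" for n a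
  have qk: "nsm m (q n a) = k n a" for n a
  proof (cases "k n a = 0")
    case False
    then show ?thesis using dvk someI_ex[of "\<lambda>v. k n a = nsm m v"] by (auto simp: q_def dv_def)
  qed (simp add: q_def)
  have sq: "supp (q n) \<subseteq> supp (k n)" for n by (auto simp: supp_def q_def)
  have fq: "finite (supp (q n))" for n using sq fk finite_subset by metis
  define W where "W n = {a \<in> X n - {pt n}. \<exists>t\<in>supp (k (Suc n)). f n t = a}" for n
  have kW: "supp (k n) \<subseteq> W n" for n
    using supp_push[of "f n" "X n" "pt n" "k (Suc n)"] unfolding kp W_def by auto
  define L where "L n a = (SOME t. t \<in> supp (k (Suc n)) \<and> f n t = a)" for n a
  have L: "L n a \<in> supp (k (Suc n)) \<and> f n (L n a) = a" if "a \<in> W n" for n a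
    using that someI_ex[of "\<lambda>t. t \<in> supp (k (Suc n)) \<and> f n t = a"] by (auto simp: W_def L_def)
  define D where "D n gn = (\<lambda>a. gn a - push (f n) (X n) (pt n) (q (Suc n)) a)" for n and gn :: "'a \<Rightarrow> 'b"
  define E where "E n gn = (\<lambda>t. q (Suc n) t + (\<Sum>a\<in>{a\<in>supp (D n gn). L n a = t}. D n gn a))" for n gn
  define g where "g = rec_nat (q 0) E"
  have g0: "g 0 = q 0" and gS: "g (Suc n) = E n (g n)" for n by (simp_all add: g_def)
  have pW: "supp (push (f n) (X n) (pt n) (q (Suc n))) \<subseteq> W n" for n
  proof
    fix t assume "t \<in> supp (push (f n) (X n) (pt n) (q (Suc n)))"
    then have "t \<in> X n - {pt n}" "\<exists>s\<in>supp (q (Suc n)). f n s = t"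
      using supp_push[of "f n" "X n" "pt n" "q (Suc n)"] by auto
    then show "t \<in> W n" using sq[of "Suc n"] unfolding W_def by blast
  qed
  have fp: "finite (supp (push (f n) (X n) (pt n) (q (Suc n))))" for n
    by (rule finite_supp_push[OF fq])
  have pk: "push (f n) (X n) (pt n) (\<lambda>s. nsm m (q (Suc n) s)) = k n" for n
    using kp[of n] qk by simp
  have nsmp: "nsm m (push (f n) (X n) (pt n) (q (Suc n)) a) = k n a" for n a
  proof -
    have "push (f n) (X n) (pt n) (\<lambda>s. nsm m (q (Suc n) s)) a = nsm m (push (f n) (X n) (pt n) (q (Suc n)) a)"
      by (rule push_nsm[OF fq])
    then show ?thesis using pk[of n] by simp
  qed
  have inv: "(\<forall>a. nsm m (g n a) = k n a) \<and> supp (g n) \<subseteq> W n \<and> finite (supp (g n))" for n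
  proof (induction n)
    case 0
    have "supp (q 0) \<subseteq> W 0" using sq[of 0] kW[of 0] by (rule order_trans)
    then show ?case using qk fq by (simp add: g0)
  next
    case (Suc n)
    let ?d = "D n (g n)"
    have sd: "supp ?d \<subseteq> W n" using Suc.IH pW[of n] supp_diff_sub[of "g n" "push (f n) (X n) (pt n) (q (Suc n))"] unfolding D_def by blast
    have fd: "finite (supp ?d)"
      unfolding D_def by (rule finite_subset[OF supp_diff_sub]) (use Suc.IH fp[of n] in simp)
    have nd: "nsm m (?d a) = 0" for a
      using Suc.IH nsmp[of n a] by (simp add: D_def nsm_diff)
    have "nsm m (g (Suc n) t) = k (Suc n) t" for t
      by (simp add: gS E_def nsm_add nsm_sum nd qk)
    moreover have ssub: "supp (g (Suc n)) \<subseteq> supp (q (Suc n)) \<union> L n ` supp ?d"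
    proof
      fix t assume t: "t \<in> supp (g (Suc n))"
      show "t \<in> supp (q (Suc n)) \<union> L n ` supp ?d"
      proof (rule ccontr)
        assume "t \<notin> supp (q (Suc n)) \<union> L n ` supp ?d"
        then have "q (Suc n) t = 0" "{a\<in>supp ?d. L n a = t} = {}" by (auto simp: supp_def)
        then have "g (Suc n) t = 0" by (simp only: gS E_def sum.empty add_0)
        with t show False by (simp add: supp_def)
      qed
    qed
    moreover have "supp (g (Suc n)) \<subseteq> W (Suc n)"
    proof
      fix t assume "t \<in> supp (g (Suc n))"
      then have "t \<in> supp (q (Suc n)) \<or> t \<in> L n ` supp ?d" using ssub by blast
      then have "t \<in> supp (k (Suc n))"
      proof
        assume "t \<in> supp (q (Suc n))" then show ?thesis using sq by blast
      next
        assume "t \<in> L n ` supp ?d"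
        then obtain a where "a \<in> supp ?d" "t = L n a" by blast
        then show ?thesis using L[of a n] sd by blast
      qed
      then show "t \<in> W (Suc n)" using kW by blast
    qed
    moreover have "finite (supp (g (Suc n)))"
      using ssub fq fd finite_subset by blast
    ultimately show ?case by blast
  qed
  have comp: "push (f n) (X n) (pt n) (g (Suc n)) = g n" for n
  proof
    fix t
    let ?d = "D n (g n)"
    let ?e = "\<lambda>t. (\<Sum>a\<in>{a\<in>supp ?d. L n a = t}. ?d a)"
    have sd: "supp ?d \<subseteq> W n" using inv[of n] pW[of n] supp_diff_sub[of "g n" "push (f n) (X n) (pt n) (q (Suc n))"] unfolding D_def by blast
    have fd: "finite (supp ?d)"
      unfolding D_def by (rule finite_subset[OF supp_diff_sub]) (use inv[of n] fp[of n] in simp)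
    have se: "supp ?e \<subseteq> L n ` supp ?d"
    proof
      fix s assume "s \<in> supp ?e"
      then have "(\<Sum>a\<in>{a\<in>supp ?d. L n a = s}. ?d a) \<noteq> 0" by (simp add: supp_def)
      then have "{a\<in>supp ?d. L n a = s} \<noteq> {}" by (metis sum.empty)
      then show "s \<in> L n ` supp ?d" by blast
    qed
    have fe: "finite (supp ?e)" using se fd finite_subset by blast
    have gs: "g (Suc n) = (\<lambda>t. q (Suc n) t + ?e t)" by (simp add: gS E_def)
    have pe: "push (f n) (X n) (pt n) ?e t = (if t \<in> X n - {pt n} then ?d t else 0)"
    proof -
      have "push (f n) (X n) (pt n) ?e t = (if t \<in> X n - {pt n} then
          (\<Sum>s\<in>{s\<in>L n ` supp ?d. f n s = t}. ?e s) else 0)"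
        by (rule push_eq) (use fd se in auto)
      also have "(\<Sum>s\<in>{s\<in>L n ` supp ?d. f n s = t}. ?e s) =
         (\<Sum>s\<in>{s\<in>L n ` supp ?d. f n s = t}. (\<Sum>a\<in>{a. a \<in> {a\<in>supp ?d. a = t} \<and> L n a = s}. ?d a))"
      proof (rule sum.cong[OF refl])
        fix s assume s: "s \<in> {s\<in>L n ` supp ?d. f n s = t}"
        have "{a\<in>supp ?d. L n a = s} = {a. a \<in> {a\<in>supp ?d. a = t} \<and> L n a = s}"
        proof (rule Collect_cong)
          fix a
          show "(a \<in> supp ?d \<and> L n a = s) = (a \<in> {a\<in>supp ?d. a = t} \<and> L n a = s)"
          proof
            assume a: "a \<in> supp ?d \<and> L n a = s"
            then have "f n (L n a) = a" using L[of a n] sd by blast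
            then show "a \<in> {a\<in>supp ?d. a = t} \<and> L n a = s" using a s by auto
          qed auto
        qed
        then show "?e s = (\<Sum>a\<in>{a. a \<in> {a\<in>supp ?d. a = t} \<and> L n a = s}. ?d a)" by simp
      qed
      also have "\<dots> = (\<Sum>a\<in>{a\<in>supp ?d. a = t}. ?d a)"
      proof (rule sum.group)
        show "finite {a\<in>supp ?d. a = t}" using fd by simp
        show "finite {s\<in>L n ` supp ?d. f n s = t}" using fd by simp
        show "L n ` {a\<in>supp ?d. a = t} \<subseteq> {s\<in>L n ` supp ?d. f n s = t}"
        proof
          fix s assume "s \<in> L n ` {a\<in>supp ?d. a = t}"
          then obtain a where a: "a \<in> supp ?d" "a = t" "s = L n a" by blast
          then have "f n s = t" using L[of a n] sd by blast
          then show "s \<in> {s\<in>L n ` supp ?d. f n s = t}" using a by blast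
        qed
      qed
      also have "\<dots> = ?d t"
      proof (cases "t \<in> supp ?d")
        case True
        then have "{a\<in>supp ?d. a = t} = {t}" by auto
        then show ?thesis by simp
      next
        case False
        then have "{a\<in>supp ?d. a = t} = {}" by auto
        then show ?thesis using False by (simp add: supp_def)
      qed
      finally show ?thesis .
    qed
    have "push (f n) (X n) (pt n) (g (Suc n)) t =
        push (f n) (X n) (pt n) (q (Suc n)) t + push (f n) (X n) (pt n) ?e t"
      unfolding gs by (rule push_add[OF fq fe])
    also have "\<dots> = g n t"
    proof (cases "t \<in> X n - {pt n}")
      case True
      then show ?thesis using pe by (simp add: D_def)
    next
      case False
      have "g n t = 0" using inv[of n] False by (auto simp: W_def supp_def)
      moreover have "push (f n) (X n) (pt n) (q (Suc n)) t = 0" unfolding push_def if_not_P[OF False] ..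
      moreover have "push (f n) (X n) (pt n) ?e t = 0" unfolding pe if_not_P[OF False] ..
      ultimately show ?thesis by simp
    qed
    finally show "push (f n) (X n) (pt n) (g (Suc n)) t = g n t" .
  qed
  have gsm: "g n \<in> smash (X n) (pt n)" for n
  proof -
    have "s \<notin> X n - {pt n} \<Longrightarrow> g n s = 0" for s
    proof (rule ccontr)
      assume "s \<notin> X n - {pt n}" "g n s \<noteq> 0"
      then have "s \<in> W n" using inv[of n] by (auto simp: supp_def)
      then show False using \<open>s \<notin> X n - {pt n}\<close> by (simp add: W_def)
    qed
    then show ?thesis using inv[of n] by (simp add: smash_def)
  qed
  have "g \<in> GXA X pt f" using gsm comp by (simp add: GXA_def)
  then show ?thesis using inv by blast
qed

theorem mainTheorem15:
  fixes X :: "nat \<Rightarrow> 'a set" and pt :: "nat \<Rightarrow> 'a" and f :: "nat \<Rightarrow> 'a \<Rightarrow> 'a"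
    and h :: "nat \<Rightarrow> 'a \<Rightarrow> 'b::ab_group_add" and m :: nat
    and xs :: "(nat \<Rightarrow> 'a) list"
  assumes "tower X pt f"
    and "m \<ge> 2"
    and "h \<in> GXA X pt f"
    and "set xs \<subseteq> limT X f"
    and "\<forall>n. \<forall>a \<in> supp (h n) - (\<lambda>x. x n) ` set xs. \<exists>v. h n a = nsm m v"
  shows "in_mH X pt f m h"
proof -
  note tw = assms(1) and hG = assms(3) and xsl = assms(4)
  have hyp: "dv m (h n a)" if "a \<in> supp (h n)" "a \<notin> (\<lambda>x. x n) ` set xs" for n a
    using assms(5) that unfolding dv_def by blast
  have hsm: "h n \<in> smash (X n) (pt n)" and hp: "push (f n) (X n) (pt n) (h (Suc n)) = h n" for n
    using hG by (auto simp: GXA_def)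
  have fh: "finite (supp (h n))" for n using hsm by (simp add: smash_def)
  have h0: "h n a = 0" if "a \<notin> X n - {pt n}" for n a using hsm[of n] that by (simp add: smash_def)
  have ptl: "pt \<in> limT X f" by (rule pt_limT[OF tw])
  define S where "S = insert pt (set xs)"
  have fS: "finite S" and Sl: "S \<subseteq> limT X f" using xsl ptl by (auto simp: S_def)
  define sp where "sp x z = (SOME i. x i \<noteq> (z i :: 'a))" for x z :: "nat \<Rightarrow> 'a"
  define N where "N = Max ((\<lambda>(x,z). sp x z) ` (S \<times> S))"
  have inj: "x n \<noteq> z n" if "x \<in> S" "z \<in> S" "x \<noteq> z" "N \<le> n" for x z n
  proof -
    from \<open>x \<noteq> z\<close> have "\<exists>i. x i \<noteq> z i" by (meson ext)
    then have 1: "x (sp x z) \<noteq> z (sp x z)" unfolding sp_def by (rule someI_ex)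
    have "sp x z \<le> N" unfolding N_def
      by (rule Max_ge) (use fS that in \<open>auto intro: image_eqI[of _ _ "(x,z)"]\<close>)
    then have "sp x z \<le> n" using that by simp
    then show ?thesis using sep_mono[of x X f z "sp x z" n] 1 Sl that by blast
  qed
  define y where "y x = (if x \<in> set xs \<and> x \<noteq> pt then h N (x N) else 0)" for x
  have sy: "supp y \<subseteq> set xs" by (auto simp: supp_def y_def split: if_splits)
  have fy: "finite (supp y)" using sy finite_subset by blast
  have syl: "supp y \<subseteq> limT X f" using sy xsl by blast
  have ysm: "y \<in> smash (limT X f) pt"
    unfolding smash_def using fy xsl by (auto simp: y_def)
  define k where "k n a = h n a - rho X pt y n a" for n a
  have ksm: "k n \<in> smash (X n) (pt n)" for n
  proof -
    have r: "rho X pt y n \<in> smash (X n) (pt n)" by (rule rho_smash[OF fy])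
    have "supp (k n) \<subseteq> supp (h n) \<union> supp (rho X pt y n)"
      unfolding k_def by (rule supp_diff_sub)
    then have "finite (supp (k n))" using fh r by (auto simp: smash_def intro: finite_subset)
    then show ?thesis using hsm[of n] r by (simp add: smash_def k_def)
  qed
  have kp: "push (f n) (X n) (pt n) (k (Suc n)) = k n" for n
  proof
    fix t
    have fr: "finite (supp (rho X pt y (Suc n)))" using rho_smash[OF fy] by (simp add: smash_def)
    have "push (f n) (X n) (pt n) (k (Suc n)) t = push (f n) (X n) (pt n) (h (Suc n)) t
        - push (f n) (X n) (pt n) (rho X pt y (Suc n)) t"
      unfolding k_def by (rule push_diff[OF fh fr])
    then show "push (f n) (X n) (pt n) (k (Suc n)) t = k n t"
      using hp[of n] rho_push[OF tw fy syl, of n] by (simp add: k_def)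
  qed
  have kG: "k \<in> GXA X pt f" using ksm kp by (simp add: GXA_def)
  have Hx: "dv m (h n (x n) - h N (x N))" if "N \<le> n" "x \<in> set xs" "x \<noteq> pt" for n x
    using that(1)
  proof (induction n rule: dec_induct)
    case base then show ?case by simp
  next
    case (step n)
    have xl: "x \<in> limT X f" using that xsl by blast
    have xS: "x \<in> S" "pt \<in> S" using that by (auto simp: S_def)
    have xn: "x n \<in> X n - {pt n}" using xl inj[OF xS \<open>x \<noteq> pt\<close> step.hyps(1)] by (auto simp: limT_def)
    have fx: "f n (x (Suc n)) = x n" using xl by (simp add: limT_def)
    let ?T = "{s \<in> insert (x (Suc n)) (supp (h (Suc n))). f n s = x n}"
    have "h n (x n) = push (f n) (X n) (pt n) (h (Suc n)) (x n)" using hp[of n] by simp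
    also have "\<dots> = (\<Sum>s\<in>?T. h (Suc n) s)"
      using push_eq[of "insert (x (Suc n)) (supp (h (Suc n)))" "h (Suc n)" "f n" "X n" "pt n" "x n"] fh xn
      by auto
    also have "\<dots> = h (Suc n) (x (Suc n)) + (\<Sum>s\<in>?T - {x (Suc n)}. h (Suc n) s)"
      by (rule sum.remove) (use fh fx in auto)
    finally have e: "h n (x n) - h (Suc n) (x (Suc n)) = (\<Sum>s\<in>?T - {x (Suc n)}. h (Suc n) s)"
      by (simp add: algebra_simps)
    have "dv m (\<Sum>s\<in>?T - {x (Suc n)}. h (Suc n) s)"
    proof (rule dv_sum)
      fix s assume s: "s \<in> ?T - {x (Suc n)}"
      then have s1: "s \<in> supp (h (Suc n))" and s2: "f n s = x n" "s \<noteq> x (Suc n)" by auto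
      have "s \<notin> (\<lambda>z. z (Suc n)) ` set xs"
      proof
        assume "s \<in> (\<lambda>z. z (Suc n)) ` set xs"
        then obtain z where z: "z \<in> set xs" "s = z (Suc n)" by blast
        have "z n = x n" using z s2 xsl by (auto simp: limT_def)
        then have "z = x" using inj[of z x n] z xS step.hyps(1) by (auto simp: S_def)
        then show False using z s2 by simp
      qed
      then show "dv m (h (Suc n) s)" using hyp s1 by blast
    qed
    then have "dv m (h n (x n) - h (Suc n) (x (Suc n)))" using e by simp
    from dv_diff[OF step.IH this]
    show ?case by (simp add: algebra_simps)
  qed
  have kN: "dv m (k n a)" if "N \<le> n" for n a
  proof (cases "a \<in> X n - {pt n}")
    case False
    have "rho X pt y n a = 0" unfolding rho_def if_not_P[OF False] ..
    then show ?thesis using h0[OF False] by (simp add: k_def)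
  next
    case True
    have re: "rho X pt y n a = (\<Sum>x\<in>{x\<in>set xs. x n = a}. y x)"
      using rho_eq[of "set xs" y X pt n a] sy True by simp
    show ?thesis
    proof (cases "\<exists>x\<in>set xs. x \<noteq> pt \<and> x n = a")
      case True2: True
      then obtain x where x: "x \<in> set xs" "x \<noteq> pt" "x n = a" by blast
      have uq: "x' = x" if "x' \<in> set xs" "x' n = a" for x'
      proof (rule ccontr)
        assume "x' \<noteq> x"
        moreover have "x' \<in> S" "x \<in> S" using that x by (auto simp: S_def)
        ultimately have "x' n \<noteq> x n" using inj \<open>N \<le> n\<close> by blast
        then show False using that x by simp
      qed
      have "{x'\<in>set xs. x' n = a} = {x}" using uq x by blast
      then have "rho X pt y n a = h N (x N)" using re x by (simp add: y_def)
      then show ?thesis using Hx[OF that x(1,2)] x by (simp add: k_def)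
    next
      case False2: False
      have "rho X pt y n a = 0" unfolding re
        by (rule sum.neutral) (use False2 in \<open>auto simp: y_def\<close>)
      moreover have "dv m (h n a)"
      proof (cases "h n a = 0")
        case False
        then have "a \<in> supp (h n)" by (simp add: supp_def)
        moreover have "a \<notin> (\<lambda>x. x n) ` set xs" using False2 True by auto
        ultimately show ?thesis by (rule hyp)
      qed simp
      ultimately show ?thesis by (simp add: k_def)
    qed
  qed
  have kall: "\<forall>a. dv m (k n a)" for n
  proof (cases "N \<le> n")
    case True then show ?thesis using kN by blast
  next
    case False
    then have "n \<le> N" by simp
    then show ?thesis
    proof (induction n rule: inc_induct)
      case base then show ?case using kN by blast
    next
      case (step n)
      show ?case
      proof
        fix a
        show "dv m (k n a)"
          unfolding kp[of n, symmetric] push_def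
          using step.IH by (auto intro: dv_sum)
      qed
    qed
  qed
  obtain g where gG: "g \<in> GXA X pt f" and gk: "\<forall>n a. nsm m (g n a) = k n a"
    using lift_div[OF tw kG] kall by blast
  have "(\<lambda>n a. h n a - nsm m (g n a)) = rho X pt y"
    using gk by (auto simp: k_def)
  moreover have "rho X pt y \<in> KXA X pt f" using ysm by (simp add: KXA_def)
  ultimately have "(\<lambda>n a. h n a - nsm m (g n a)) \<in> KXA X pt f" by simp
  then show ?thesis unfolding in_mH_def using gG by blast
qed

end
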